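(* Let $(\mathbb S,+,\cdot)$ be an S-Field with Base Unit $A$, let $s\in\mathbb S$ and let $m\in\mathbb S_0$ with $m\neq 0$. Then there exist $x,y\in\mathbb S_0$ with $s=x-1+y\cdot A$, and, for such $x,y$, Division By Scalars is given by the unique formula $$\frac{s}{m}=m^{-1}\cdot[x+y-(m^{-1}\cdot y)]-1+(m^{-1}\cdot y)\cdot A.$$
   Context: An S-Structure is a triple $(\mathbb S,+,\cdot)$ where $\mathbb S$ is a set and $+,\cdot$ are binary operations on $\mathbb S$ such that: $(\mathbb S,+)$ is a commutative group with identity $0$ (the inverse of $s$ is written $-s$, and $s-t:=s+(-t)$); $\mathbb S$ is closed under $\cdot$; and there exists $s\in\mathbb S$ with $0\cdot s\neq 0$ or $s\cdot 0\neq 0$. Multiplication binds tighter than addition. The structures considered come with a distinguished element of $\mathbb S$ denoted $1$. It is Commutative if $s\cdot t=t\cdot s$ for all $s,t$. For a Commutative S-Structure and $\alpha\in\mathbb S$, put $\mathbb S_\alpha=\{s\in\mathbb S:0\cdot s=s\cdot 0=\alpha\}$ and $\Lambda=\{\alpha\in\mathbb S:\mathbb S_\alpha\neq\emptyset\}$. Wheel Distributive: $s\cdot(t+r)+(s\cdot 0)=(s\cdot t)+(s\cdot r)$ for all $s,t,r\in\mathbb S$. S-Associative: for all $m,n\in\mathbb S_0$ and $s\in\mathbb S$, $m\cdot(n\cdot s)=(m\cdot n)\cdot s-([(m-1)\cdot(n-1)]\cdot(0\cdot s))$. Base: if $\mathbb S_0\neq\emptyset$ and $\alpha\in\Lambda$,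 $q\in\mathbb S_\alpha$ is a Base for $\mathbb S_\alpha$ if $q+\beta\in\mathbb S_\alpha$ for all $\beta\in\mathbb S_0$ and every $s\in\mathbb S_\alpha$ equals $q+\beta$ for some $\beta\in\mathbb S_0$. Coordinated: $\mathbb S_0\neq\emptyset$ and every $\mathbb S_\alpha$ with $\alpha\in\Lambda$ has a Base. Standard Bases: a Coordinated Commutative S-Structure has Standard Bases if there is a specified element $q_0(1)\in\mathbb S_1$ which is a Base for $\mathbb S_1$, and for every $\alpha\in\Lambda$ the element $q_0(\alpha):=\alpha\cdot(q_0(1)+1)-1$ lies in $\mathbb S_\alpha$ and is a Base for $\mathbb S_\alpha$. The Base Unit is $A:=q_0(1)+1$. An Essential S-Structure is an S-Structure that is Commutative, Wheel Distributive, S-Associative, has Standard Bases (in particular is Coordinated), satisfies $0,1\in\mathbb S_0$, and satisfies $\mathbb S_0=\{1\cdot x:x\in\mathbb S_0\}$. A Unity is an element $e\in\Lambda$ with $e\cdot s=s\cdot e=s$ for all $s\in\mathbb S$. Scalar Inverses: the structure has a Unity $e$ and for every $x\in\mathbb S_0$ with $x\neq 0$ there is $x^{-1}\in\mathbb S_0$ with $x\cdot x^{-1}=x^{-1}\cdot x=e$. An S-Ring is an Essential S-Structure with a Unity; an S-Field is an S-Ring with Scalar Inverses. Division By Scalars: for $s\in\mathbb S$ and $m\in\mathbb S_0$, $\frac{s}{m}$ denotes an element $q\in\mathbb S$ such that $s=m\cdot q=q\cdot m$. *)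

theory Defs
  imports Main
begin

text \<open>An S-Structure is modelled on a type 'a whose addition forms a commutative
group (class ab_group_add; the set S is UNIV), with the multiplication a
parameter mul, the distinguished element 1 a parameter u, and the specified
Base q0(1) a parameter q1.\<close>

definition S_sub :: "('a::ab_group_add \<Rightarrow> 'a \<Rightarrow> 'a) \<Rightarrow> 'a \<Rightarrow> 'a set" where
  "S_sub mul \<alpha> = {s. mul 0 s = \<alpha> \<and> mul s 0 = \<alpha>}"

definition Lam :: "('a::ab_group_add \<Rightarrow> 'a \<Rightarrow> 'a) \<Rightarrow> 'a set" where
  "Lam mul = {\<alpha>. S_sub mul \<alpha> \<noteq> {}}"

definition s_structure :: "('a::ab_group_add \<Rightarrow> 'a \<Rightarrow> 'a) \<Rightarrow> bool" where
  "s_structure mul \<longleftrightarrow> (\<exists>s. mul 0 s \<noteq> 0 \<or> mul s 0 \<noteq> 0)"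

definition s_commutative :: "('a \<Rightarrow> 'a \<Rightarrow> 'a) \<Rightarrow> bool" where
  "s_commutative mul \<longleftrightarrow> (\<forall>s t. mul s t = mul t s)"

definition wheel_distributive :: "('a::ab_group_add \<Rightarrow> 'a \<Rightarrow> 'a) \<Rightarrow> bool" where
  "wheel_distributive mul \<longleftrightarrow>
     (\<forall>s t r. mul s (t + r) + mul s 0 = mul s t + mul s r)"

definition s_associative :: "('a::ab_group_add \<Rightarrow> 'a \<Rightarrow> 'a) \<Rightarrow> 'a \<Rightarrow> bool" where
  "s_associative mul u \<longleftrightarrow>
     (\<forall>m\<in>S_sub mul 0. \<forall>n\<in>S_sub mul 0. \<forall>s.
        mul m (mul n s) = mul (mul m n) s - mul (mul (m - u) (n - u)) (mul 0 s))"

definition is_base :: "('a::ab_group_add \<Rightarrow> 'a \<Rightarrow> 'a) \<Rightarrow> 'a \<Rightarrow> 'a \<Rightarrow> bool" where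
  "is_base mul \<alpha> q \<longleftrightarrow> S_sub mul 0 \<noteq> {} \<and> \<alpha> \<in> Lam mul \<and> q \<in> S_sub mul \<alpha> \<and>
     (\<forall>\<beta>\<in>S_sub mul 0. q + \<beta> \<in> S_sub mul \<alpha>) \<and>
     (\<forall>s\<in>S_sub mul \<alpha>. \<exists>\<beta>\<in>S_sub mul 0. s = q + \<beta>)"

definition coordinated :: "('a::ab_group_add \<Rightarrow> 'a \<Rightarrow> 'a) \<Rightarrow> bool" where
  "coordinated mul \<longleftrightarrow> S_sub mul 0 \<noteq> {} \<and> (\<forall>\<alpha>\<in>Lam mul. \<exists>q. is_base mul \<alpha> q)"

definition q0 :: "('a::ab_group_add \<Rightarrow> 'a \<Rightarrow> 'a) \<Rightarrow> 'a \<Rightarrow> 'a \<Rightarrow> 'a \<Rightarrow> 'a" where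
  "q0 mul u q1 \<alpha> = mul \<alpha> (q1 + u) - u"

definition base_unit :: "'a::ab_group_add \<Rightarrow> 'a \<Rightarrow> 'a" where
  "base_unit u q1 = q1 + u"

definition standard_bases :: "('a::ab_group_add \<Rightarrow> 'a \<Rightarrow> 'a) \<Rightarrow> 'a \<Rightarrow> 'a \<Rightarrow> bool" where
  "standard_bases mul u q1 \<longleftrightarrow> coordinated mul \<and> s_commutative mul \<and>
     q1 \<in> S_sub mul u \<and> is_base mul u q1 \<and>
     (\<forall>\<alpha>\<in>Lam mul. q0 mul u q1 \<alpha> \<in> S_sub mul \<alpha> \<and> is_base mul \<alpha> (q0 mul u q1 \<alpha>))"

definition essential :: "('a::ab_group_add \<Rightarrow> 'a \<Rightarrow> 'a) \<Rightarrow> 'a \<Rightarrow> 'a \<Rightarrow> bool" where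
  "essential mul u q1 \<longleftrightarrow> s_structure mul \<and> s_commutative mul \<and> wheel_distributive mul \<and>
     s_associative mul u \<and> standard_bases mul u q1 \<and>
     0 \<in> S_sub mul 0 \<and> u \<in> S_sub mul 0 \<and>
     S_sub mul 0 = {mul u x | x. x \<in> S_sub mul 0}"

definition is_unity :: "('a::ab_group_add \<Rightarrow> 'a \<Rightarrow> 'a) \<Rightarrow> 'a \<Rightarrow> bool" where
  "is_unity mul e \<longleftrightarrow> e \<in> Lam mul \<and> (\<forall>s. mul e s = s \<and> mul s e = s)"

definition scalar_inverses :: "('a::ab_group_add \<Rightarrow> 'a \<Rightarrow> 'a) \<Rightarrow> bool" where
  "scalar_inverses mul \<longleftrightarrow> (\<exists>e. is_unity mul e \<and>
     (\<forall>x\<in>S_sub mul 0. x \<noteq> 0 \<longrightarrow> (\<exists>y\<in>S_sub mul 0. mul x y = e \<and> mul y x = e)))"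

definition s_ring :: "('a::ab_group_add \<Rightarrow> 'a \<Rightarrow> 'a) \<Rightarrow> 'a \<Rightarrow> 'a \<Rightarrow> bool" where
  "s_ring mul u q1 \<longleftrightarrow> essential mul u q1 \<and> (\<exists>e. is_unity mul e)"

definition s_field :: "('a::ab_group_add \<Rightarrow> 'a \<Rightarrow> 'a) \<Rightarrow> 'a \<Rightarrow> 'a \<Rightarrow> bool" where
  "s_field mul u q1 \<longleftrightarrow> s_ring mul u q1 \<and> scalar_inverses mul"

definition is_div_by_scalar :: "('a \<Rightarrow> 'a \<Rightarrow> 'a) \<Rightarrow> 'a \<Rightarrow> 'a \<Rightarrow> 'a \<Rightarrow> bool" where
  "is_div_by_scalar mul s m q \<longleftrightarrow> s = mul m q \<and> s = mul q m"

end

theory Submission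
  imports Defs
begin

theorem proposition4p1p1:
  fixes mul :: "'a::ab_group_add \<Rightarrow> 'a \<Rightarrow> 'a" and u q1 e minv s m :: 'a
  assumes "s_field mul u q1"
    and "is_unity mul e"
    and "m \<in> S_sub mul 0" and "m \<noteq> 0"
    and "minv \<in> S_sub mul 0" and "mul m minv = e" and "mul minv m = e"
  shows "(\<exists>x\<in>S_sub mul 0. \<exists>y\<in>S_sub mul 0. s = x - u + mul y (base_unit u q1)) \<and>
    (\<forall>x\<in>S_sub mul 0. \<forall>y\<in>S_sub mul 0. s = x - u + mul y (base_unit u q1) \<longrightarrow>
       (let q = mul minv (x + y - mul minv y) - u + mul (mul minv y) (base_unit u q1)
        in is_div_by_scalar mul s m q \<and> (\<forall>q'. is_div_by_scalar mul s m q' \<longrightarrow> q' = q)))"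
proof -
  define K where "K = S_sub mul 0"
  have Kmem: "\<And>k. k \<in> K \<longleftrightarrow> mul 0 k = 0 \<and> mul k 0 = 0" by (simp add: K_def S_sub_def)
  have ess: "essential mul u q1" and si: "scalar_inverses mul"
    using assms(1) by (auto simp: s_field_def s_ring_def)
  have comm: "\<And>a b. mul a b = mul b a" using ess by (auto simp: essential_def s_commutative_def)
  have wd: "\<And>a b c. mul a (b + c) + mul a 0 = mul a b + mul a c"
    using ess by (auto simp: essential_def wheel_distributive_def)
  have sa: "\<And>a b c. a \<in> K \<Longrightarrow> b \<in> K \<Longrightarrow>
      mul a (mul b c) = mul (mul a b) c - mul (mul (a - u) (b - u)) (mul 0 c)"
    using ess by (auto simp: essential_def s_associative_def K_def)
  have sb: "standard_bases mul u q1" using ess by (simp add: essential_def)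
  have uK: "u \<in> K" and zK: "0 \<in> K" using ess by (auto simp: essential_def K_def)
  have sstr: "\<exists>t. mul 0 t \<noteq> 0 \<or> mul t 0 \<noteq> 0" using ess by (simp add: essential_def s_structure_def)
  have unit: "\<And>t. mul e t = t \<and> mul t e = t" using assms(2) by (simp add: is_unity_def)
  have z00: "mul 0 0 = 0" using zK Kmem by simp
  have lin: "mul k (a + b) = mul k a + mul k b" if "k \<in> K" for k a b
    using wd[of k a b] Kmem[of k] that by simp
  have linneg: "\<And>k a. k \<in> K \<Longrightarrow> mul k (- a) = - mul k a"
  proof -
    fix k a assume "k \<in> K"
    then have "mul k (a + - a) = mul k a + mul k (- a)" by (rule lin)
    then show "mul k (- a) = - mul k a" using \<open>k \<in> K\<close> Kmem
      by (simp add: eq_neg_iff_add_eq_0 add.commute)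
  qed
  have lindiff: "mul k (a - b) = mul k a - mul k b" if "k \<in> K" for k a b
  proof -
    have "mul k (a + - b) = mul k a + mul k (- b)" using lin[OF that] .
    then show ?thesis using linneg[OF that, of b] by simp
  qed
  have Kadd: "a + b \<in> K" if "a \<in> K" "b \<in> K" for a b
    using lin[OF zK, of a b] Kmem comm[of "a + b" 0] that by simp
  have Kneg: "- a \<in> K" if "a \<in> K" for a
    using linneg[OF zK, of a] Kmem comm[of "- a" 0] that by simp
  have Kdiff: "\<And>a b. a \<in> K \<Longrightarrow> b \<in> K \<Longrightarrow> a - b \<in> K"
    using Kadd Kneg by (metis diff_conv_add_uminus)
  have uprod: "\<And>k. k \<in> K \<Longrightarrow> mul u k \<in> K"
    using ess by (auto simp: essential_def K_def)
  have negmul: "mul (- a) w = - mul a w" if "a \<in> K" "w \<in> K" for a w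
    using that linneg[of w a] comm[of "- a" w] comm[of w a] by simp
  have Kmul: "\<And>a b. a \<in> K \<Longrightarrow> b \<in> K \<Longrightarrow> mul a b \<in> K"
  proof -
    fix a b assume a: "a \<in> K" and b: "b \<in> K"
    have Y: "mul (- u) (a - u) \<in> K"
      using negmul[OF uK Kdiff[OF a uK]] uprod[OF Kdiff[OF a uK]] Kneg by simp
    have "mul 0 (mul a b) = mul (mul 0 a) b - mul (mul (0 - u) (a - u)) (mul 0 b)"
      using sa[OF zK a] .
    also have "\<dots> = 0" using a b Y Kmem z00 by simp
    finally show "mul a b \<in> K" using Kmem comm[of "mul a b" 0] by simp
  qed
  have eK: "e \<in> K" using unit Kmem by simp
  have ue: "u = e"
  proof (rule ccontr)
    assume "u \<noteq> e"
    then have c0: "e - u \<noteq> 0" by simp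
    have cK: "e - u \<in> K" using Kdiff eK uK by simp
    obtain e' where e': "is_unity mul e'" and
      inv: "\<forall>x\<in>S_sub mul 0. x \<noteq> 0 \<longrightarrow> (\<exists>y\<in>S_sub mul 0. mul x y = e' \<and> mul y x = e')"
      using si by (auto simp: scalar_inverses_def)
    have "e' = e" using e' unit[of e'] by (simp add: is_unity_def)
    then obtain ci where ci: "ci \<in> K" "mul (e - u) ci = e" using inv cK c0 by (auto simp: K_def)
    have nK: "ci + u \<in> K" using Kadd ci uK by simp
    have "\<And>t. mul 0 t = 0"
    proof -
      fix t
      have "mul e (mul (ci + u) t) = mul (mul e (ci + u)) t - mul (mul (e - u) (ci + u - u)) (mul 0 t)"
        using sa[OF eK nK] .
      then have "mul (mul (e - u) ci) (mul 0 t) = 0" using unit by simp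
      then show "mul 0 t = 0" using ci unit by simp
    qed
    moreover obtain t where "mul 0 t \<noteq> 0 \<or> mul t 0 \<noteq> 0" using sstr by blast
    ultimately show False using comm[of t 0] by simp
  qed
  have Asum: "mul 0 (base_unit u q1) = e"
  proof -
    have "q1 \<in> S_sub mul u" using sb by (simp add: standard_bases_def)
    then have "mul 0 q1 = u" by (simp add: S_sub_def)
    then show ?thesis using lin[OF zK] Kmem uK ue by (simp add: base_unit_def)
  qed
  have z0K: "\<And>t. mul 0 t \<in> K"
  proof -
    fix t
    have "mul 0 (mul 0 t) = mul (mul 0 0) t - mul (mul (0 - u) (0 - u)) (mul 0 t)"
      using sa[OF zK zK] .
    moreover have "mul (0 - u) (0 - u) = e"
      using linneg[OF Kneg[OF uK], of u] comm[of "- u" u] unit ue linneg[OF uK, of u] by simp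
    ultimately have "mul 0 (mul 0 t) = 0" using z00 unit by simp
    then show "mul 0 t \<in> K" using Kmem comm[of "mul 0 t" 0] by simp
  qed
  have part1: "\<exists>x\<in>S_sub mul 0. \<exists>y\<in>S_sub mul 0. s = x - u + mul y (base_unit u q1)"
  proof -
    define \<alpha> where "\<alpha> = mul 0 s"
    have sin: "s \<in> S_sub mul \<alpha>" using comm[of s 0] by (simp add: S_sub_def \<alpha>_def)
    then have "\<alpha> \<in> Lam mul" by (auto simp: Lam_def)
    then have "is_base mul \<alpha> (q0 mul u q1 \<alpha>)" using sb by (simp add: standard_bases_def)
    then obtain \<beta> where b: "\<beta> \<in> S_sub mul 0" "s = q0 mul u q1 \<alpha> + \<beta>"
      using sin by (auto simp: is_base_def)
    have "s = \<beta> - u + mul \<alpha> (base_unit u q1)" using b by (simp add: q0_def base_unit_def)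
    moreover have "\<alpha> \<in> S_sub mul 0" using z0K K_def \<alpha>_def by simp
    ultimately show ?thesis using b by blast
  qed
  have cancel: "\<And>w. w \<in> K \<Longrightarrow> mul m (mul minv w) = w"
  proof -
    fix w assume w: "w \<in> K"
    have mK: "m \<in> K" "minv \<in> K" using assms K_def by auto
    have "mul m (mul minv w) = mul (mul m minv) w - mul (mul (m - u) (minv - u)) (mul 0 w)"
      using sa[OF mK] .
    also have "\<dots> = w" using assms(6) unit w Kmem[of w] Kmem[of "mul (m - u) (minv - u)"] Kmul[OF Kdiff[OF mK(1) uK] Kdiff[OF mK(2) uK]] by simp
    finally show "mul m (mul minv w) = w" .
  qed
  have part2: "\<And>x y. x \<in> K \<Longrightarrow> y \<in> K \<Longrightarrow> s = x - u + mul y (base_unit u q1) \<Longrightarrow>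
       (let q = mul minv (x + y - mul minv y) - u + mul (mul minv y) (base_unit u q1)
        in is_div_by_scalar mul s m q \<and> (\<forall>q'. is_div_by_scalar mul s m q' \<longrightarrow> q' = q))"
  proof -
    fix x y assume x: "x \<in> K" and y: "y \<in> K" and s: "s = x - u + mul y (base_unit u q1)"
    have mK: "m \<in> K" using assms(3) K_def by simp
    have miK: "minv \<in> K" using assms(5) K_def by simp
    define A where "A = base_unit u q1"
    define n where "n = mul minv y"
    define q where "q = mul minv (x + y - n) - u + mul n A"
    have unit_r: "\<And>t. mul t e = t" and unit_l: "\<And>t. mul e t = t" using unit by auto
    have nK: "n \<in> K" unfolding n_def by (rule Kmul[OF miK y])
    have mn: "mul m n = y" unfolding n_def by (rule cancel[OF y])
    have A0: "mul 0 A = e" unfolding A_def by (rule Asum)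
    have mnA: "mul m (mul n A) = mul y A - mul (m - e) (n - e)"
      using sa[OF mK nK, of A] by (simp only: mn A0 ue unit_r)
    have expand: "mul (m - e) (n - e) = y - n - m + e"
    proof -
      have "mul (m - e) (n - e) = mul (m - e) n - mul (m - e) e"
        by (rule lindiff[OF Kdiff[OF mK eK]])
      also have "mul (m - e) n = mul n m - mul n e"
        using comm[of "m - e" n] lindiff[OF nK, of m e] by simp
      also have "mul n m = y" using comm[of n m] mn by simp
      finally show ?thesis by (simp add: unit_r algebra_simps)
    qed
    have wK: "x + y - n \<in> K" by (intro Kdiff Kadd x y nK)
    have mq: "mul m q = s"
    proof -
      have "mul m q = mul m (mul minv (x + y - n)) - mul m u + mul m (mul n A)"
        unfolding q_def by (simp only: lin[OF mK] lindiff[OF mK])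
      also have "\<dots> = (x + y - n) - m + (mul y A - (y - n - m + e))"
        by (simp only: cancel[OF wK] ue unit_r mnA expand)
      also have "\<dots> = s" unfolding s A_def ue by (simp add: algebra_simps)
      finally show ?thesis .
    qed
    have uniq: "\<And>q'. mul m q' = s \<Longrightarrow> q' = q"
    proof -
      fix q' assume q': "mul m q' = s"
      define t where "t = q' - q"
      have mt: "mul m t = 0" using q' mq lindiff mK t_def by simp
      define k where "k = mul 0 t"
      have kK: "k \<in> K" using z0K k_def by simp
      have "mul 0 (mul m t) = mul (mul 0 m) t - mul (mul (0 - u) (m - u)) (mul 0 t)"
        using sa[OF zK mK] .
      moreover have "mul (0 - u) (m - u) = - (m - e)"
        using negmul[OF uK Kdiff[OF mK uK]] ue unit by simp
      moreover have "mul (- (m - e)) k = - (mul k m - k)"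
        using comm[of "- (m - e)" k] linneg[OF kK, of "m - e"] lindiff[OF kK, of m e] unit by simp
      ultimately have "0 = k + (mul k m - k)"
        using mt z00 mK Kmem k_def by simp
      then have kmz: "mul m k = 0" using comm[of k m] by (simp add: algebra_simps)
      have eqk: "mul minv (mul m k) = mul (mul minv m) k - mul (mul (minv - u) (m - u)) (mul 0 k)"
        using sa[OF miK mK] .
      have Z: "mul (mul (minv - u) (m - u)) 0 = 0"
        using Kmem[of "mul (minv - u) (m - u)"] Kmul[OF Kdiff[OF miK uK] Kdiff[OF mK uK]] by blast
      have mi0: "mul minv 0 = 0" using Kmem[of minv] miK by blast
      have k0': "mul 0 k = 0" using Kmem[of k] kK by blast
      have ue1: "\<And>t. mul e t = t" using unit by blast
      have "0 = k" using eqk by (simp only: kmz mi0 assms(7) k0' Z ue1 diff_zero)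
      have "mul minv (mul m t) = mul (mul minv m) t - mul (mul (minv - u) (m - u)) (mul 0 t)"
        using sa[OF miK mK] .
      moreover have "mul 0 t = 0" using k_def \<open>0 = k\<close> by simp
      ultimately have "0 = t" by (simp only: mt mi0 assms(7) ue1 Z diff_zero)
      then have "t = 0" by simp
      then show "q' = q" using t_def by simp
    qed
    show "let q = mul minv (x + y - mul minv y) - u + mul (mul minv y) (base_unit u q1)
        in is_div_by_scalar mul s m q \<and> (\<forall>q'. is_div_by_scalar mul s m q' \<longrightarrow> q' = q)"
    proof -
      have d: "is_div_by_scalar mul s m q"
        unfolding is_div_by_scalar_def using mq comm[of m q] by simp
      have u: "\<forall>q'. is_div_by_scalar mul s m q' \<longrightarrow> q' = q"
      proof (intro allI impI)
        fix q' assume "is_div_by_scalar mul s m q'"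
        then have "mul m q' = s" unfolding is_div_by_scalar_def by simp
        then show "q' = q" by (rule uniq)
      qed
      have qe: "q = mul minv (x + y - mul minv y) - u + mul (mul minv y) (base_unit u q1)"
        unfolding q_def n_def A_def by (rule refl)
      show ?thesis unfolding Let_def qe[symmetric] using d u by (rule conjI)
    qed
  qed
  show ?thesis
    apply (rule conjI[OF part1])
    apply (intro ballI impI)
    apply (rule part2)
    apply (simp_all add: K_def)
    done
qed

end
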